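(* Let $\Lambda\subset\mathbb{R}^3$ be a closed set of Lebesgue measure zero and let $w\in C^\infty(\mathbb{R}^3\setminus\Lambda)$ be such that $e^w\in L_{1}(\mathbb{R}^3)$ and there exist $K>0$, $q>0$ with $K^{-1}d_0(y,\Lambda)^{-q}\leq e^{w(y)}\leq K d_0(y,\Lambda)^{-q}$ for all $y\in\mathbb{R}^3\setminus\Lambda$. Then for every $x\in\mathbb{R}^3\setminus\Lambda$, $$\big((-\Delta)^{1/2}w\big)(x)\geq e^{-w(x)}\big((-\Delta)^{1/2}e^w\big)(x).$$
   Context: $d_0$ is the Euclidean distance. For $0<\alpha<1$, $L_{2\alpha}(\mathbb{R}^3)=\{h:\int_{\mathbb{R}^3}\frac{|h(x)|}{1+|x|^{3+2\alpha}}dx<\infty\}$ (here $L_1$ means the case $\alpha=1/2$). The fractional Laplacian is $(-\Delta)^{\alpha}h(x)=-d_{3,\alpha}\int_{\mathbb{R}^3}\frac{h(x+y)+h(x-y)-2h(x)}{|y|^{3+2\alpha}}dy$ for $h\in L_{2\alpha}(\mathbb{R}^3)$, with $d_{3,\alpha}>0$ the normalizing constant making the Fourier symbol $|\xi|^{2\alpha}$. *)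

theory Defs
  imports "HOL-Analysis.Analysis"
begin

text \<open>C^k on a set U (intended for open U): continuous, and for k+1 the function is
  Frechet differentiable at every point of U with every directional derivative of class C^k.\<close>
fun Ck_on :: "nat \<Rightarrow> (real^3) set \<Rightarrow> (real^3 \<Rightarrow> real) \<Rightarrow> bool" where
  "Ck_on 0 U f = continuous_on U f"
| "Ck_on (Suc n) U f =
     (\<exists>f'. (\<forall>x\<in>U. (f has_derivative f' x) (at x)) \<and> (\<forall>v. Ck_on n U (\<lambda>x. f' x v)))"

definition smooth_on3 :: "(real^3) set \<Rightarrow> (real^3 \<Rightarrow> real) \<Rightarrow> bool" where
  "smooth_on3 U f \<longleftrightarrow> (\<forall>n. Ck_on n U f)"

definition L_weighted :: "real \<Rightarrow> (real^3 \<Rightarrow> real) \<Rightarrow> bool" where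
  "L_weighted a h \<longleftrightarrow>
     integrable lborel (\<lambda>x. \<bar>h x\<bar> / (1 + norm x powr (3 + a)))"

text \<open>Normalizing constant d_{3,alpha} for which the Fourier symbol is |xi|^{2 alpha}:
  d_{3,alpha} = 4^alpha Gamma(3/2+alpha) / (2 pi^(3/2) |Gamma(-alpha)|).\<close>
definition d3 :: "real \<Rightarrow> real" where
  "d3 a = 4 powr a * Gamma (3/2 + a) / (2 * pi powr (3/2) * \<bar>Gamma (- a)\<bar>)"

definition frac_lap :: "real \<Rightarrow> (real^3 \<Rightarrow> real) \<Rightarrow> real^3 \<Rightarrow> real" where
  "frac_lap a h x = - d3 a * (\<integral>y. (h (x + y) + h (x - y) - 2 * h x) / norm y powr (3 + 2 * a) \<partial>lborel)"

end

theory Submission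
  imports Defs "HOL-Real_Asymp.Real_Asymp"
begin


lemma D1:
  fixes R :: real assumes R: "R > 0"
  shows "(\<integral>\<^sup>+t. ennreal (\<bar>t\<bar> powr (-2/3) * indicator {-R..R} t) \<partial>lborel) < \<infinity>"
proof -
  have "(\<lambda>t::real. t powr (-2/3)) integrable_on {0..R}"
    using R by (intro integrable_on_powr_from_0) auto
  then obtain I where I: "((\<lambda>t::real. t powr (-2/3)) has_integral I) {0..R}"
    by (auto simp: integrable_on_def)
  have I2: "((\<lambda>t::real. \<bar>t\<bar> powr (-2/3)) has_integral I) {0..R}"
    using I by (rule has_integral_eq[rotated]) auto
  have I3: "((\<lambda>t::real. \<bar>t\<bar> powr (-2/3)) has_integral I) {-R..0}"
    using has_integral_reflect_real[where f="\<lambda>t::real. \<bar>t\<bar> powr (-2/3)" and i=I and a=0 and b=R] I2 by simp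
  have I4: "((\<lambda>t::real. \<bar>t\<bar> powr (-2/3)) has_integral (I + I)) {-R..R}"
    using has_integral_combine[OF _ _ I3 I2] R by simp
  have "(\<integral>\<^sup>+t. ennreal (indicator {-R..R} t * \<bar>t\<bar> powr (-2/3)) \<partial>lborel) = ennreal (I + I)"
    by (rule nn_integral_has_integral_lebesgue[OF _ I4]) auto
  then show ?thesis by (simp add: mult.commute)
qed




lemma D2:
  fixes p :: real assumes p: "p > 1"
  shows "(\<integral>\<^sup>+t. ennreal ((1 + \<bar>t\<bar>) powr (-p)) \<partial>lborel) < \<infinity>"
proof -
  define f where "f t = (1 + \<bar>t\<bar>) powr (-p)" for t :: real
  define F where "F t = (1 + t) powr (1-p) / (1-p)" for t :: real
  have fm[measurable]: "f \<in> borel_measurable borel" unfolding f_def by measurable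
  have der: "DERIV F t :> f t" if "0 \<le> t" for t
  proof -
    have "DERIV F t :> (1-p) * (1+t) powr (1-p-1) * 1 / (1-p)"
      unfolding F_def using that p
      by (auto intro!: derivative_eq_intros)
    then show ?thesis using that p by (simp add: f_def)
  qed
  have lim: "(F \<longlongrightarrow> 0) at_top" unfolding F_def using p by real_asymp
  have half: "(\<integral>\<^sup>+x. ennreal (f x) * indicator {0 ..} x \<partial>lborel) = 0 - F 0"
    by (rule nn_integral_FTC_atLeast[OF fm der _ lim]) (auto simp: f_def)
  have refl: "(\<integral>\<^sup>+x. ennreal (f x) * indicator {0 ..} (-x) \<partial>lborel)
      = (\<integral>\<^sup>+x. ennreal (f x) * indicator {0 ..} x \<partial>lborel)"
    using nn_integral_real_affine[of "\<lambda>x. ennreal (f x) * indicator {0 ..} x" "-1" 0]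
    by (simp add: f_def)
  have "(\<integral>\<^sup>+t. ennreal (f t) \<partial>lborel) \<le>
      (\<integral>\<^sup>+x. ennreal (f x) * indicator {0 ..} x + ennreal (f x) * indicator {0 ..} (-x) \<partial>lborel)"
    by (intro nn_integral_mono) (auto split: split_indicator)
  also have "\<dots> = (\<integral>\<^sup>+x. ennreal (f x) * indicator {0 ..} x \<partial>lborel) + (\<integral>\<^sup>+x. ennreal (f x) * indicator {0 ..} (-x) \<partial>lborel)"
    by (rule nn_integral_add) auto
  also have "\<dots> < \<infinity>" using half refl by simp
  finally show ?thesis by (simp add: f_def)
qed




lemma prodpow3: "(\<Prod>b\<in>(Basis::(real^3) set). c) = c^3"
  by (simp add: prod_constant)

lemma powr3: "x > 0 \<Longrightarrow> ((x::real) powr a)^3 = x powr (3*a)"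
  by (simp add: power3_eq_cube powr_add[symmetric])

lemma L1:
  fixes r :: real assumes r: "r > 0"
  shows "integrable lborel (\<lambda>y::real^3. indicator (cball 0 r) y * norm y powr (-2))"
proof (rule integrableI_nonneg)
  show "(\<lambda>y::real^3. indicator (cball 0 r) y * norm y powr (-2)) \<in> borel_measurable lborel"
    by (intro borel_measurable_times borel_measurable_indicator powr_real_measurable borel_measurable_continuous_onI continuous_intros) auto
  show "AE y in lborel. 0 \<le> indicator (cball 0 r) y * norm (y::real^3) powr (-2)" by auto
  define \<phi> where "\<phi> t = (if t = 0 then top else ennreal (\<bar>t\<bar> powr (-2/3))) * indicator {-r..r} t" for t :: real
  have \<phi>m[measurable]: "\<phi> \<in> borel_measurable borel" unfolding \<phi>_def by measurable
  have "(\<integral>\<^sup>+t. \<phi> t \<partial>lborel) = (\<integral>\<^sup>+t. ennreal (\<bar>t\<bar> powr (-2/3) * indicator {-r..r} t) \<partial>lborel)"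
    apply (rule nn_integral_cong_AE)
    using AE_lborel_singleton[of "0::real"] by eventually_elim (auto simp: \<phi>_def ennreal_mult split: split_indicator)
  also have "\<dots> < \<infinity>" using D1 r by blast
  finally have fin: "(\<integral>\<^sup>+t. \<phi> t \<partial>lborel) < \<infinity>" .
  have pw: "ennreal (indicator (cball 0 r) y * norm y powr (-2)) \<le> (\<Prod>b\<in>Basis. \<phi> (y \<bullet> b))" for y :: "real^3"
  proof (cases "y \<in> cball 0 r")
    case False then show ?thesis by simp
  next
    case True
    then have yr: "norm y \<le> r" by simp
    have ind: "indicator {-r..r} (y \<bullet> b) = (1::ennreal)" if "b \<in> Basis" for b
      using Basis_le_norm[OF that, of y] yr by (auto simp: indicator_def abs_le_iff)
    show ?thesis
    proof (cases "\<exists>b\<in>Basis. y \<bullet> b = 0")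
      case True
      have "(\<Prod>b\<in>Basis. \<phi> (y \<bullet> b)) = top"
        unfolding ennreal_prod_eq_top using True ind by (auto simp: \<phi>_def)
      then show ?thesis by simp
    next
      case False
      have y0: "y \<noteq> 0" using False by (metis inner_zero_left nonempty_Basis ex_in_conv)
      have P1: "(\<Prod>b\<in>Basis. \<phi> (y \<bullet> b)) = (\<Prod>b\<in>Basis. ennreal (\<bar>y \<bullet> b\<bar> powr (-2/3)))"
        using False ind by (intro prod.cong) (auto simp: \<phi>_def)
      also have "\<dots> = ennreal (\<Prod>b\<in>Basis. \<bar>y \<bullet> b\<bar> powr (-2/3))"
        by (rule prod_ennreal) auto
      finally have P1': "(\<Prod>b\<in>Basis. \<phi> (y \<bullet> b)) = ennreal (\<Prod>b\<in>Basis. \<bar>y \<bullet> b\<bar> powr (-2/3))" .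
      have P2: "(\<Prod>b\<in>Basis. \<bar>y \<bullet> b\<bar> powr (-2/3)) \<ge> (\<Prod>b\<in>(Basis::(real^3) set). norm y powr (-2/3))"
        using False by (intro prod_mono conjI powr_mono2' Basis_le_norm) auto
      have P3: "(\<Prod>b\<in>(Basis::(real^3) set). norm y powr (-2/3)) = norm y powr (-2)"
        using y0 by (simp add: prodpow3 powr3)
      show ?thesis using True unfolding P1' using P2 P3 by (simp add: ennreal_leI)
    qed
  qed
  have "(\<integral>\<^sup>+y. ennreal (indicator (cball 0 r) y * norm (y::real^3) powr (-2)) \<partial>lborel)
      \<le> (\<integral>\<^sup>+y. (\<Prod>b\<in>Basis. \<phi> ((y::real^3) \<bullet> b)) \<partial>lborel)"
    by (rule nn_integral_mono) (rule pw)
  also have "\<dots> = (\<Prod>b\<in>(Basis::(real^3) set). (\<integral>\<^sup>+t. \<phi> t \<partial>lborel))"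
    by (rule nn_integral_lborel_prod) auto
  also have "\<dots> = (\<integral>\<^sup>+t. \<phi> t \<partial>lborel)^3" by (simp add: prodpow3)
  also have "\<dots> < \<infinity>" using fin by (simp add: power_less_top_ennreal)
  finally show "(\<integral>\<^sup>+y. ennreal (indicator (cball 0 r) y * norm (y::real^3) powr (-2)) \<partial>lborel) < \<infinity>" .
qed

lemma L2:
  fixes r s :: real assumes r: "r > 0" and s: "s > 3"
  shows "integrable lborel (\<lambda>y::real^3. indicator (- cball 0 r) y * norm y powr (-s))"
proof (rule integrableI_nonneg)
  show "(\<lambda>y::real^3. indicator (- cball 0 r) y * norm y powr (-s)) \<in> borel_measurable lborel"
    by measurable
  show "AE y in lborel. 0 \<le> indicator (- cball 0 r) y * norm (y::real^3) powr (-s)" by auto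
  define \<phi> where "\<phi> t = ennreal ((1 + \<bar>t\<bar>) powr (-(s/3)))" for t :: real
  have \<phi>m[measurable]: "\<phi> \<in> borel_measurable borel" unfolding \<phi>_def by measurable
  have fin: "(\<integral>\<^sup>+t. \<phi> t \<partial>lborel) < \<infinity>" unfolding \<phi>_def using s by (intro D2) auto
  define c where "c = ((1+r)/r) powr s"
  have pw: "ennreal (indicator (- cball 0 r) y * norm y powr (-s)) \<le> ennreal c * (\<Prod>b\<in>Basis. \<phi> (y \<bullet> b))" for y :: "real^3"
  proof (cases "y \<in> cball 0 r")
    case True then show ?thesis by simp
  next
    case False
    then have yr: "norm y > r" by simp
    have P1: "(\<Prod>b\<in>Basis. \<phi> (y \<bullet> b)) = ennreal (\<Prod>b\<in>Basis. (1 + \<bar>y \<bullet> b\<bar>) powr (-(s/3)))"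
      unfolding \<phi>_def by (rule prod_ennreal) auto
    have P2: "(\<Prod>b\<in>Basis. (1 + \<bar>y \<bullet> b\<bar>) powr (-(s/3))) \<ge> (\<Prod>b\<in>(Basis::(real^3) set). (1 + norm y) powr (-(s/3)))"
      using s by (intro prod_mono conjI powr_mono2' add_left_mono Basis_le_norm) auto
    have P3: "(\<Prod>b\<in>(Basis::(real^3) set). (1 + norm y) powr (-(s/3))) = (1 + norm y) powr (-s)"
      by (simp add: prodpow3 powr3 add_pos_nonneg)
    have A: "(\<Prod>b\<in>Basis. \<phi> (y \<bullet> b)) \<ge> ennreal ((1 + norm y) powr (-s))"
      unfolding P1 using P2 P3 by (intro ennreal_leI) simp
    have "1 + norm y \<le> ((1+r)/r) * norm y" using yr r by (simp add: field_simps)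
    then have "(((1+r)/r) * norm y) powr (-s) \<le> (1 + norm y) powr (-s)"
      apply (intro powr_mono2') using s r by (auto intro: add_pos_nonneg)
    moreover have "norm y powr (-s) = c * (((1+r)/r) * norm y) powr (-s)"
    proof -
      have a: "(1+r)/r > 0" using r by simp
      have "c * (((1+r)/r) * norm y) powr (-s) = (((1+r)/r) powr s * ((1+r)/r) powr (-s)) * norm y powr (-s)"
      proof -
        have "(((1+r)/r) * norm y) powr (-s) = ((1+r)/r) powr (-s) * norm y powr (-s)"
          by (meson powr_mult less_imp_le a norm_ge_zero)
        then show ?thesis unfolding c_def by (simp only: mult.assoc)
      qed
      also have "((1+r)/r) powr s * ((1+r)/r) powr (-s) = 1"
        using a r by (simp add: powr_add[symmetric])
      finally show ?thesis by simp
    qed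
    moreover have "c \<ge> 0" unfolding c_def by simp
    ultimately have "norm y powr (-s) \<le> c * (1 + norm y) powr (-s)"
      by (metis mult_left_mono)
    then have "ennreal (norm y powr (-s)) \<le> ennreal c * ennreal ((1 + norm y) powr (-s))"
      by (simp add: ennreal_mult[symmetric] c_def)
    also have "\<dots> \<le> ennreal c * (\<Prod>b\<in>Basis. \<phi> (y \<bullet> b))" using A by (intro mult_left_mono) auto
    finally show ?thesis using False by simp
  qed
  have "(\<integral>\<^sup>+y. ennreal (indicator (- cball 0 r) y * norm (y::real^3) powr (-s)) \<partial>lborel)
      \<le> (\<integral>\<^sup>+y. ennreal c * (\<Prod>b\<in>Basis. \<phi> ((y::real^3) \<bullet> b)) \<partial>lborel)"
    by (intro nn_integral_mono pw)
  also have "\<dots> = ennreal c * (\<integral>\<^sup>+y. (\<Prod>b\<in>Basis. \<phi> ((y::real^3) \<bullet> b)) \<partial>lborel)"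
    by (rule nn_integral_cmult) auto
  also have "(\<integral>\<^sup>+y. (\<Prod>b\<in>Basis. \<phi> ((y::real^3) \<bullet> b)) \<partial>lborel) = (\<Prod>b\<in>(Basis::(real^3) set). (\<integral>\<^sup>+t. \<phi> t \<partial>lborel))"
    by (rule nn_integral_lborel_prod) (auto simp: \<phi>_def)
  also have "\<dots> = (\<integral>\<^sup>+t. \<phi> t \<partial>lborel)^3" by (simp add: prodpow3)
  also have "ennreal c * \<dots> < \<infinity>" using fin by (simp add: power_less_top_ennreal ennreal_mult_less_top)
  finally show "(\<integral>\<^sup>+y. ennreal (indicator (- cball 0 r) y * norm (y::real^3) powr (-s)) \<partial>lborel) < \<infinity>" .
qed




lemma lin_expand:
  assumes "linear (f :: real^3 \<Rightarrow> real)"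
  shows "f y = (\<Sum>b\<in>Basis. (y \<bullet> b) * f b)"
proof -
  have "f y = f (\<Sum>b\<in>Basis. (y \<bullet> b) *\<^sub>R b)" by (simp add: euclidean_representation)
  also have "\<dots> = (\<Sum>b\<in>Basis. (y \<bullet> b) * f b)"
    using assms by (simp add: linear_sum linear_scale o_def)
  finally show ?thesis .
qed

lemma sum_basis_bound:
  fixes y :: "real^3"
  assumes "\<And>b. b \<in> Basis \<Longrightarrow> \<bar>g b\<bar> \<le> M"
  shows "\<bar>\<Sum>b\<in>Basis. (y \<bullet> b) * g b\<bar> \<le> 3 * M * norm y"
proof -
  have "\<bar>\<Sum>b\<in>Basis. (y \<bullet> b) * g b\<bar> \<le> (\<Sum>b\<in>(Basis::(real^3) set). norm y * M)"
    by (rule order_trans[OF sum_abs sum_mono])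
       (auto simp: abs_mult intro!: mult_mono Basis_le_norm assms)
  also have "\<dots> = 3 * M * norm y" by simp
  finally show ?thesis .
qed




lemma taylor_bounds:
  fixes w :: "real^3 \<Rightarrow> real"
  assumes U: "open U" and sm: "Ck_on (Suc (Suc 0)) U w" and r: "r > 0" and sub: "cball x r \<subseteq> U"
  shows "\<exists>C1 C2. \<forall>y. norm y \<le> r \<longrightarrow> \<bar>w (x+y) - w x\<bar> \<le> C1 * norm y \<and> \<bar>w (x-y) - w x\<bar> \<le> C1 * norm y
        \<and> \<bar>w (x+y) + w (x-y) - 2 * w x\<bar> \<le> C2 * (norm y)^2"
proof -
  from sm obtain f' where d1: "\<forall>z\<in>U. (w has_derivative f' z) (at z)"
    and c1: "\<forall>v. Ck_on (Suc 0) U (\<lambda>z. f' z v)" by auto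
  from c1 have "\<forall>v. \<exists>g. (\<forall>z\<in>U. ((\<lambda>z. f' z v) has_derivative g z) (at z)) \<and> (\<forall>u. continuous_on U (\<lambda>z. g z u))"
    by simp
  then obtain G where G: "\<And>v. (\<forall>z\<in>U. ((\<lambda>z. f' z v) has_derivative G v z) (at z))"
     and Gc: "\<And>v u. continuous_on U (\<lambda>z. G v z u)" by metis
  have lin1: "linear (f' z)" if "z \<in> U" for z
    using d1 that has_derivative_bounded_linear bounded_linear.linear by blast
  have lin2: "linear (G v z)" if "z \<in> U" for v z
    using G that has_derivative_bounded_linear bounded_linear.linear by blast
  have fc: "continuous_on U (\<lambda>z. f' z v)" for v
  proof (rule continuous_at_imp_continuous_on, rule ballI)
    fix z assume "z \<in> U"
    then have "((\<lambda>z. f' z v) has_derivative G v z) (at z)" using G by blast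
    then show "isCont (\<lambda>z. f' z v) z" by (rule has_derivative_continuous)
  qed
  have sub': "continuous_on (cball x r) h" if "continuous_on U h" for h :: "real^3 \<Rightarrow> real"
    using that sub continuous_on_subset by blast
  define S1 where "S1 z = (\<Sum>b\<in>(Basis::(real^3) set). \<bar>f' z b\<bar>)" for z
  define S2 where "S2 z = (\<Sum>b\<in>(Basis::(real^3) set). \<Sum>b'\<in>(Basis::(real^3) set). \<bar>G b z b'\<bar>)" for z
  have "continuous_on (cball x r) S1" unfolding S1_def
    by (intro continuous_intros sub' fc)
  then obtain z1 where "\<forall>z\<in>cball x r. S1 z \<le> S1 z1"
    using continuous_attains_sup[of "cball x r" S1] r by auto
  then have M1: "\<bar>f' z b\<bar> \<le> S1 z1" if "z \<in> cball x r" "b \<in> Basis" for z b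
    using that unfolding S1_def
    by (smt (verit) finite_Basis sum_nonneg_leq_bound abs_ge_zero member_le_sum)
  have "continuous_on (cball x r) S2" unfolding S2_def
    by (intro continuous_intros sub' Gc)
  then obtain z2 where "\<forall>z\<in>cball x r. S2 z \<le> S2 z2"
    using continuous_attains_sup[of "cball x r" S2] r by auto
  then have M2: "\<bar>G b z b'\<bar> \<le> S2 z2" if "z \<in> cball x r" "b \<in> Basis" "b' \<in> Basis" for z b b'
  proof -
    have "\<bar>G b z b'\<bar> \<le> (\<Sum>b'\<in>(Basis::(real^3) set). \<bar>G b z b'\<bar>)"
      using that by (intro member_le_sum) auto
    also have "\<dots> \<le> S2 z" unfolding S2_def
      using that by (intro member_le_sum[where f="\<lambda>b. \<Sum>b'\<in>Basis. \<bar>G b z b'\<bar>"]) (auto intro: sum_nonneg)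
    also have "\<dots> \<le> S2 z2" using \<open>\<forall>z\<in>cball x r. S2 z \<le> S2 z2\<close> that by auto
    finally show ?thesis .
  qed
  show ?thesis
  proof (intro exI allI impI)
    fix y :: "real^3" assume ny: "norm y \<le> r"
    define p where "p t = x + t *\<^sub>R y" for t :: real
    have pin: "p t \<in> cball x r" if "-1 \<le> t" "t \<le> 1" for t
    proof -
      have "dist x (p t) = \<bar>t\<bar> * norm y" by (simp add: p_def dist_norm)
      also have "\<dots> \<le> 1 * r" using that ny by (intro mult_mono) auto
      finally show ?thesis by simp
    qed
    have pU: "p t \<in> U" if "-1 \<le> t" "t \<le> 1" for t using pin[OF that] sub by auto
    have pd: "(p has_derivative (\<lambda>h. h *\<^sub>R y)) (at t)" for t
      unfolding p_def by (auto intro!: derivative_eq_intros)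
    define \<phi> where "\<phi> t = w (p t)" for t
    define D1 where "D1 t = (\<Sum>b\<in>Basis. (y \<bullet> b) * f' (p t) b)" for t
    define D2 where "D2 t = (\<Sum>b\<in>Basis. (y \<bullet> b) * G b (p t) y)" for t
    have dphi: "DERIV \<phi> t :> D1 t" if "-1 \<le> t" "t \<le> 1" for t
    proof -
      have "((\<lambda>t. w (p t)) has_derivative (\<lambda>h. f' (p t) (h *\<^sub>R y))) (at t)"
        using has_derivative_compose[OF pd] d1 pU[OF that] by blast
      moreover have "(\<lambda>h. f' (p t) (h *\<^sub>R y)) = (*) (D1 t)"
        using lin1[OF pU[OF that]] lin_expand[OF lin1[OF pU[OF that]], of y]
        by (auto simp: D1_def linear_scale fun_eq_iff)
      ultimately show ?thesis unfolding has_field_derivative_def \<phi>_def by simp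
    qed
    have dD1: "DERIV D1 t :> D2 t" if "-1 \<le> t" "t \<le> 1" for t
    proof -
      have "DERIV (\<lambda>t. f' (p t) b) t :> G b (p t) y" for b
      proof -
        have "((\<lambda>t. f' (p t) b) has_derivative (\<lambda>h. G b (p t) (h *\<^sub>R y))) (at t)"
          using has_derivative_compose[OF pd, of "\<lambda>z. f' z b"] G pU[OF that] by blast
        moreover have "(\<lambda>h. G b (p t) (h *\<^sub>R y)) = (*) (G b (p t) y)"
          using lin2[OF pU[OF that]] by (auto simp: linear_scale fun_eq_iff)
        ultimately show ?thesis unfolding has_field_derivative_def by simp
      qed
      then show ?thesis unfolding D1_def D2_def
        by (auto intro!: derivative_eq_intros DERIV_sum)
    qed
    have bD1: "\<bar>D1 t\<bar> \<le> 3 * S1 z1 * norm y" if "-1 \<le> t" "t \<le> 1" for t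
      unfolding D1_def by (rule sum_basis_bound) (rule M1[OF pin[OF that]])
    have bD2: "\<bar>D2 t\<bar> \<le> 9 * S2 z2 * (norm y)^2" if "-1 \<le> t" "t \<le> 1" for t
    proof -
      have "\<bar>G b (p t) y\<bar> \<le> 3 * S2 z2 * norm y" if b: "b \<in> Basis" for b
      proof -
        have lz: "linear (G b (p t))" using lin2 pU \<open>-1 \<le> t\<close> \<open>t \<le> 1\<close> by blast
        have "\<bar>\<Sum>b'\<in>Basis. (y \<bullet> b') * G b (p t) b'\<bar> \<le> 3 * S2 z2 * norm y"
          by (rule sum_basis_bound) (rule M2[OF pin[OF \<open>-1 \<le> t\<close> \<open>t \<le> 1\<close>] b])
        then show ?thesis using lin_expand[OF lz, of y] by simp
      qed
      then have "\<bar>D2 t\<bar> \<le> 3 * (3 * S2 z2 * norm y) * norm y"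
        unfolding D2_def by (rule sum_basis_bound)
      then show ?thesis by (simp add: power2_eq_square)
    qed
    define diff where "diff m = (if m = 0 then \<phi> else if m = 1 then D1 else D2)" for m :: nat
    have dd: "\<forall>m t. m < n \<and> -1 \<le> t \<and> t \<le> 1 \<longrightarrow> DERIV (diff m) t :> diff (Suc m) t" if "n \<le> 2" for n
      using that dphi dD1 by (auto simp: diff_def less_Suc_eq)
    have d0: "diff 0 = \<phi>" by (simp add: diff_def)
    obtain t1 where t1: "0 < t1" "t1 < 1" "\<phi> 1 = \<phi> 0 + D1 t1"
      using Taylor[of 1 diff \<phi> "-1" 1 0 1, OF _ d0 dd] by (auto simp: diff_def)
    obtain t2 where t2: "-1 < t2" "t2 < 0" "\<phi> (-1) = \<phi> 0 - D1 t2"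
      using Taylor[of 1 diff \<phi> "-1" 1 0 "-1", OF _ d0 dd] by (auto simp: diff_def)
    obtain t3 where t3: "0 < t3" "t3 < 1" "\<phi> 1 = \<phi> 0 + D1 0 + D2 t3 / 2"
      using Taylor[of 2 diff \<phi> "-1" 1 0 1, OF _ d0 dd] by (auto simp: diff_def eval_nat_numeral)
    obtain t4 where t4: "-1 < t4" "t4 < 0" "\<phi> (-1) = \<phi> 0 - D1 0 + D2 t4 / 2"
      using Taylor[of 2 diff \<phi> "-1" 1 0 "-1", OF _ d0 dd] by (auto simp: diff_def eval_nat_numeral)
    have e1: "\<phi> 1 = w (x+y)" "\<phi> (-1) = w (x-y)" "\<phi> 0 = w x" by (auto simp: \<phi>_def p_def)
    show "\<bar>w (x+y) - w x\<bar> \<le> (3 * S1 z1) * norm y \<and> \<bar>w (x-y) - w x\<bar> \<le> (3 * S1 z1) * norm y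
        \<and> \<bar>w (x+y) + w (x-y) - 2 * w x\<bar> \<le> (9 * S2 z2) * (norm y)^2"
      using t1 t2 t3 t4 e1 bD1[of t1] bD1[of t2] bD2[of t3] bD2[of t4] by auto
  qed
qed




lemma lborel_affine1:
  fixes x :: "real^3" and c :: real
  assumes c: "c = 1 \<or> c = -1"
  shows "lborel = distr lborel borel (\<lambda>y. x + c *\<^sub>R y)"
proof -
  have "lborel = density (distr lborel borel (\<lambda>y. x + c *\<^sub>R y)) (\<lambda>_. \<bar>c\<bar>^DIM(real^3))"
    using c by (intro lborel_affine) auto
  also have "\<dots> = distr lborel borel (\<lambda>y. x + c *\<^sub>R y)"
    using c by (auto simp: density_1)
  finally show ?thesis .
qed

lemma trans_int:
  fixes x :: "real^3" and c :: real and f :: "real^3 \<Rightarrow> real"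
  assumes c: "c = 1 \<or> c = -1" and f: "integrable lborel f"
  shows "integrable lborel (\<lambda>y. f (x + c *\<^sub>R y))"
proof -
  have fm: "f \<in> borel_measurable borel" using borel_measurable_integrable[OF f] by simp
  have "integrable (distr lborel borel (\<lambda>y. x + c *\<^sub>R y)) f"
    using f lborel_affine1[OF c, of x] by simp
  then show ?thesis
    using integrable_distr_eq[of "\<lambda>y. x + c *\<^sub>R y" lborel borel f] fm by simp
qed

lemma trans_null:
  fixes x :: "real^3" and c :: real
  assumes c: "c = 1 \<or> c = -1" and N: "N \<in> null_sets lborel"
  shows "{y. x + c *\<^sub>R y \<in> N} \<in> null_sets lborel"
proof -
  have Nb: "N \<in> sets borel" using N by (auto simp: null_sets_def)
  have "emeasure lborel {y. x + c *\<^sub>R y \<in> N} = emeasure (distr lborel borel (\<lambda>y. x + c *\<^sub>R y)) N"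
    using Nb by (subst emeasure_distr) (auto simp: vimage_def)
  also have "\<dots> = emeasure lborel N" using lborel_affine1[OF c, of x] by simp
  also have "\<dots> = 0" using N by auto
  finally show ?thesis
    using Nb by (auto simp: null_sets_def)
qed

lemma sandwich_integrable:
  fixes f L U :: "'a \<Rightarrow> real"
  assumes "integrable M L" "integrable M U" "f \<in> borel_measurable M"
    "AE y in M. L y \<le> f y \<and> f y \<le> U y"
  shows "integrable M f"
proof (rule Bochner_Integration.integrable_bound[where f="\<lambda>y. \<bar>L y\<bar> + \<bar>U y\<bar>"])
  show "integrable M (\<lambda>y. \<bar>L y\<bar> + \<bar>U y\<bar>)" using assms by auto
  show "f \<in> borel_measurable M" by fact
  show "AE y in M. norm (f y) \<le> norm (\<bar>L y\<bar> + \<bar>U y\<bar>)"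
    using assms(4) by eventually_elim auto
qed




theorem proposition5p1:
  fixes \<Lambda> :: "(real^3) set" and w :: "real^3 \<Rightarrow> real" and K q :: real
  assumes "closed \<Lambda>"
    and "\<Lambda> \<in> null_sets lborel"
    and "smooth_on3 (- \<Lambda>) w"
    and "L_weighted 1 (\<lambda>y. exp (w y))"
    and "K > 0" and "q > 0"
    and "\<forall>y\<in>- \<Lambda>. inverse K * infdist y \<Lambda> powr (- q) \<le> exp (w y)
                     \<and> exp (w y) \<le> K * infdist y \<Lambda> powr (- q)"
  shows "\<forall>x\<in>- \<Lambda>. frac_lap (1/2) w x \<ge> exp (- w x) * frac_lap (1/2) (\<lambda>y. exp (w y)) x"
proof
  fix x assume xn: "x \<in> - \<Lambda>"
  have Lne: "\<Lambda> \<noteq> {}"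
  proof
    assume "\<Lambda> = {}"
    with assms(7) xn have "exp (w x) \<le> K * infdist x \<Lambda> powr (-q)" by auto
    with \<open>\<Lambda> = {}\<close> show False by (simp add: infdist_def)
  qed
  then obtain a0 where a0: "a0 \<in> \<Lambda>" by auto
  have opn: "open (-\<Lambda>)" using assms(1) by auto
  obtain r where r: "r > 0" "cball x r \<subseteq> -\<Lambda>" using open_contains_cball opn xn by blast
  have Ck2: "Ck_on (Suc (Suc 0)) (-\<Lambda>) w" using assms(3) unfolding smooth_on3_def by blast
  obtain C1 C2 where T: "\<And>y. norm y \<le> r \<Longrightarrow> \<bar>w (x+y) - w x\<bar> \<le> C1 * norm y \<and> \<bar>w (x-y) - w x\<bar> \<le> C1 * norm y
        \<and> \<bar>w (x+y) + w (x-y) - 2 * w x\<bar> \<le> C2 * (norm y)^2"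
    using taylor_bounds[OF opn Ck2 r] by blast
  define E where "E z = exp (w z) / (1 + norm z powr 4)" for z :: "real^3"
  have Eint: "integrable lborel E" using assms(4) unfolding L_weighted_def E_def by simp
  have Em[measurable]: "E \<in> borel_measurable borel" using borel_measurable_integrable[OF Eint] by simp
  have wm[measurable]: "w \<in> borel_measurable borel"
  proof -
    have "(\<lambda>z. ln (E z * (1 + norm z powr 4))) \<in> borel_measurable borel" by measurable
    moreover have "(\<lambda>z. ln (E z * (1 + norm z powr 4))) = w"
    proof
      fix z :: "real^3"
      have "1 + norm z powr 4 > 0" by (simp add: add_pos_nonneg)
      then show "ln (E z * (1 + norm z powr 4)) = w z" by (simp add: E_def)
    qed
    ultimately show ?thesis by metis
  qed
  define A where "A y = (w (x + y) + w (x - y) - 2 * w x) / norm y powr 4" for y :: "real^3"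
  define B where "B y = exp (- w x) * ((exp (w (x + y)) + exp (w (x - y)) - 2 * exp (w x)) / norm y powr 4)" for y :: "real^3"
  have AB: "A y \<le> B y" for y
  proof -
    have "exp (- w x) * (exp (w (x + y)) + exp (w (x - y)) - 2 * exp (w x))
        = exp (w (x+y) - w x) + exp (w (x-y) - w x) - 2"
      by (simp add: exp_diff exp_minus field_simps)
    then have "B y = (exp (w (x+y) - w x) + exp (w (x-y) - w x) - 2) / norm y powr 4"
      unfolding B_def by (simp add: times_divide_eq_right[symmetric])
    moreover have "w (x + y) + w (x - y) - 2 * w x \<le> exp (w (x+y) - w x) + exp (w (x-y) - w x) - 2"
      using exp_ge_add_one_self[of "w (x+y) - w x"] exp_ge_add_one_self[of "w (x-y) - w x"] by linarith
    ultimately show ?thesis unfolding A_def by (simp add: divide_right_mono)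
  qed
  have AEn: "AE y in lborel. x + y \<notin> \<Lambda> \<and> x - y \<notin> \<Lambda>"
  proof (rule AE_I')
    have n1: "{y. x + 1 *\<^sub>R y \<in> \<Lambda>} \<in> null_sets lborel"
      using trans_null[where c=1 and x=x, OF _ assms(2)] by auto
    have n2: "{y. x + (-1) *\<^sub>R y \<in> \<Lambda>} \<in> null_sets lborel"
      using trans_null[where c="-1" and x=x, OF _ assms(2)] by auto
    show "{y. x + 1 *\<^sub>R y \<in> \<Lambda>} \<union> {y. x + (-1) *\<^sub>R y \<in> \<Lambda>} \<in> null_sets lborel"
      using n1 n2 by (rule null_sets.Un)
    show "{y \<in> space lborel. \<not> (x + y \<notin> \<Lambda> \<and> x - y \<notin> \<Lambda>)} \<subseteq> {y. x + 1 *\<^sub>R y \<in> \<Lambda>} \<union> {y. x + (-1) *\<^sub>R y \<in> \<Lambda>}"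
      by auto
  qed
  define c1 where "c1 = norm x + norm a0 + 1"
  have c1: "c1 > 0" unfolding c1_def using norm_ge_zero[of x] norm_ge_zero[of a0] by linarith
  have lnsq: "ln t \<le> 2 * sqrt t" if "t > 0" for t :: real
  proof -
    have "ln t = 2 * ln (sqrt t)" using that by (simp add: ln_sqrt)
    also have "ln (sqrt t) \<le> sqrt t - 1" using that by (intro ln_le_minus_one) auto
    finally show ?thesis by simp
  qed
  have wlow: "w z \<ge> - ln K - 2 * q * (sqrt (norm y) + sqrt c1)"
    if z: "z \<notin> \<Lambda>" "norm z \<le> norm x + norm y" for z y :: "real^3"
  proof -
    have d0: "infdist z \<Lambda> > 0" using infdist_pos_not_in_closed[OF assms(1) Lne z(1)] .
    have "inverse K * infdist z \<Lambda> powr (-q) \<le> exp (w z)" using assms(7) z(1) by auto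
    then have "ln (inverse K * infdist z \<Lambda> powr (-q)) \<le> ln (exp (w z))"
      using d0 assms(5) by (subst ln_le_cancel_iff) auto
    moreover have "ln (inverse K * infdist z \<Lambda> powr (-q)) = - ln K - q * ln (infdist z \<Lambda>)"
      using d0 assms(5) by (simp add: ln_mult ln_inverse ln_powr)
    ultimately have w1: "- ln K - q * ln (infdist z \<Lambda>) \<le> w z" by simp
    have "infdist z \<Lambda> \<le> dist z a0" by (rule infdist_le[OF a0])
    also have "\<dots> \<le> norm z + norm a0" by (simp add: dist_norm norm_triangle_ineq4)
    also have "\<dots> \<le> norm y + c1" using z(2) by (simp add: c1_def)
    finally have "ln (infdist z \<Lambda>) \<le> ln (norm y + c1)" using d0 by simp
    also have "\<dots> \<le> 2 * sqrt (norm y + c1)" using c1 by (intro lnsq add_nonneg_pos) auto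
    also have "\<dots> \<le> 2 * (sqrt (norm y) + sqrt c1)" using c1 sqrt_add_le_add_sqrt[of "norm y" c1] by simp
    finally have "q * ln (infdist z \<Lambda>) \<le> q * (2 * (sqrt (norm y) + sqrt c1))"
      using assms(6) by (intro mult_left_mono) auto
    then show ?thesis using w1 by (simp add: algebra_simps)
  qed
  define k0 where "k0 = 2 * \<bar>ln K\<bar> + 4 * q * sqrt c1 + 2 * \<bar>w x\<bar>"
  define L where "L y = - (\<bar>C2\<bar> * (indicator (cball 0 r) y * norm y powr -2))
     - (k0 * (indicator (-cball 0 r) y * norm y powr -4) + 4 * q * (indicator (-cball 0 r) y * norm y powr (-(7/2))))" for y :: "real^3"
  have I1: "integrable lborel (\<lambda>y::real^3. indicator (cball 0 r) y * norm y powr -2)" using L1[OF r(1)] .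
  have I2: "integrable lborel (\<lambda>y::real^3. indicator (- cball 0 r) y * norm y powr -4)" using L2[OF r(1), of 4] by simp
  have I3: "integrable lborel (\<lambda>y::real^3. indicator (- cball 0 r) y * norm y powr (-(7/2)))" using L2[OF r(1), of "7/2"] by simp
  have Lint: "integrable lborel L" unfolding L_def using I1 I2 I3
    by (intro Bochner_Integration.integrable_diff Bochner_Integration.integrable_add integrable_mult_right integrable_minus)
  have LA: "AE y in lborel. L y \<le> A y"
    using AEn
  proof eventually_elim
    case (elim y)
    show ?case
    proof (cases "norm y \<le> r")
      case True
      show ?thesis
      proof (cases "y = 0")
        case True then show ?thesis by (simp add: L_def A_def)
      next
        case False
        then have ny: "norm y > 0" by simp
        have "- (\<bar>C2\<bar> * (norm y)^2) \<le> w (x + y) + w (x - y) - 2 * w x"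
          using T[OF True] abs_ge_self[of C2] by (smt (verit) mult_right_mono zero_le_power2)
        then have "- (\<bar>C2\<bar> * (norm y)^2) / norm y ^ 4 \<le> (w (x + y) + w (x - y) - 2 * w x) / norm y ^ 4"
          using ny by (intro divide_right_mono) auto
        moreover have "- (\<bar>C2\<bar> * (norm y)^2) / norm y ^ 4 = - (\<bar>C2\<bar> * norm y powr -2)"
          using ny by (simp add: powr_minus field_simps power2_eq_square powr_realpow eval_nat_numeral)
        ultimately show ?thesis using True ny by (simp add: L_def A_def powr_realpow)
      qed
    next
      case False
      then have ny: "norm y > r" by simp
      then have ny0: "norm y > 0" using r by linarith
      have "w (x + y) \<ge> - ln K - 2 * q * (sqrt (norm y) + sqrt c1)"
        using elim wlow[of "x + y" y] by (simp add: norm_triangle_ineq)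
      moreover have "w (x - y) \<ge> - ln K - 2 * q * (sqrt (norm y) + sqrt c1)"
        using elim wlow[of "x - y" y] by (simp add: norm_triangle_ineq4)
      ultimately have num: "- (k0 + 4 * q * sqrt (norm y)) \<le> w (x + y) + w (x - y) - 2 * w x"
        unfolding k0_def by (simp add: algebra_simps)
      have "- (k0 + 4 * q * sqrt (norm y)) / norm y powr 4 \<le> A y"
        unfolding A_def using ny0 num by (intro divide_right_mono) auto
      moreover have "- (k0 + 4 * q * sqrt (norm y)) / norm y powr 4
           = - (k0 * norm y powr -4 + 4 * q * norm y powr (-(7/2)))"
      proof -
        have "norm y powr (-(7/2)) = norm y powr (1/2 - 4)" by simp
        also have "\<dots> = norm y powr (1/2) / norm y powr 4" by (rule powr_diff)
        also have "\<dots> = sqrt (norm y) / norm y powr 4" by (simp add: powr_half_sqrt)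
        finally have "sqrt (norm y) / norm y powr 4 = norm y powr (-(7/2))" by simp
        then show ?thesis using ny0 by (simp add: powr_minus field_simps)
      qed
      ultimately show ?thesis using False by (simp add: L_def)
    qed
  qed
  define D where "D = \<bar>C1\<bar> * r"
  define k1 where "k1 = 1 / r^4 + (norm x / r + 1)^4"
  define U where "U y = (\<bar>C2\<bar> + exp D * C1^2) * (indicator (cball 0 r) y * norm y powr -2)
      + exp (- w x) * k1 * (indicator (-cball 0 r) y * (E (x + y) + E (x - y)))" for y :: "real^3"
  have Ep: "integrable lborel (\<lambda>y. E (x + y))" using trans_int[where c=1 and x=x, OF _ Eint] by simp
  have Em': "integrable lborel (\<lambda>y. E (x - y))" using trans_int[where c="-1" and x=x, OF _ Eint] by simp
  have I4: "integrable lborel (\<lambda>y. indicator (-cball 0 r) y * (E (x + y) + E (x - y)))"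
    using integrable_mult_indicator[OF _ Bochner_Integration.integrable_add[OF Ep Em'], of "-cball 0 r"] by simp
  have Uint: "integrable lborel U" unfolding U_def using I1 I4
    by (intro Bochner_Integration.integrable_add integrable_mult_right)
  have expb: "exp t \<le> 1 + t + exp D * t^2 / 2" if "\<bar>t\<bar> \<le> D" for t
  proof -
    obtain s where s: "\<bar>s\<bar> \<le> \<bar>t\<bar>" "exp t = (\<Sum>m<2. t ^ m / fact m) + exp s / fact 2 * t ^ 2"
      using Maclaurin_exp_le[of t 2] by blast
    have "exp s \<le> exp D" using s(1) that by simp
    then have "exp s * t^2 \<le> exp D * t^2" by (intro mult_right_mono) auto
    then show ?thesis using s(2) by (simp add: eval_nat_numeral)
  qed
  have BU: "B y \<le> U y" for y
  proof (cases "norm y \<le> r")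
    case True
    show ?thesis
    proof (cases "y = 0")
      case True then show ?thesis using r(1) by (simp add: B_def U_def)
    next
      case False
      then have ny: "norm y > 0" by simp
      define \<alpha> where "\<alpha> = w (x + y) - w x"
      define \<beta> where "\<beta> = w (x - y) - w x"
      have Ty: "\<bar>\<alpha>\<bar> \<le> C1 * norm y" "\<bar>\<beta>\<bar> \<le> C1 * norm y" "\<bar>\<alpha> + \<beta>\<bar> \<le> C2 * (norm y)^2"
        using T[OF True] by (simp_all add: \<alpha>_def \<beta>_def algebra_simps)
      have C1y: "C1 * norm y \<le> D" unfolding D_def using True ny
        by (smt (verit) abs_ge_self mult_mono abs_ge_zero norm_ge_zero)
      have sq: "t^2 \<le> C1^2 * (norm y)^2" if "\<bar>t\<bar> \<le> C1 * norm y" for t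
      proof -
        have "\<bar>t\<bar>^2 \<le> (C1 * norm y)^2" using that by (intro power_mono) auto
        then show ?thesis by (simp add: power_mult_distrib)
      qed
      have ea: "exp \<alpha> \<le> 1 + \<alpha> + exp D * (C1^2 * (norm y)^2) / 2"
        using expb[of \<alpha>] Ty(1) C1y sq[OF Ty(1)] by (smt (verit) divide_right_mono exp_gt_zero mult_left_mono)
      have eb: "exp \<beta> \<le> 1 + \<beta> + exp D * (C1^2 * (norm y)^2) / 2"
        using expb[of \<beta>] Ty(2) C1y sq[OF Ty(2)] by (smt (verit) divide_right_mono exp_gt_zero mult_left_mono)
      have "exp \<alpha> + exp \<beta> - 2 \<le> (\<bar>C2\<bar> + exp D * C1^2) * (norm y)^2"
      proof -
        have "C2 * (norm y)^2 \<le> \<bar>C2\<bar> * (norm y)^2" by (intro mult_right_mono) auto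
        then have h1: "\<alpha> + \<beta> \<le> \<bar>C2\<bar> * (norm y)^2" using Ty(3) by linarith
        have h2: "(\<bar>C2\<bar> + exp D * C1^2) * (norm y)^2 = \<bar>C2\<bar> * (norm y)^2 + exp D * (C1^2 * (norm y)^2)"
          by (simp add: algebra_simps)
        show ?thesis unfolding h2 using ea eb h1 by linarith
      qed
      moreover have "B y = (exp \<alpha> + exp \<beta> - 2) / norm y powr 4"
      proof -
        have "exp (- w x) * (exp (w (x + y)) + exp (w (x - y)) - 2 * exp (w x))
            = exp \<alpha> + exp \<beta> - 2"
          by (simp add: \<alpha>_def \<beta>_def exp_diff exp_minus field_simps)
        then show ?thesis unfolding B_def by (simp add: times_divide_eq_right[symmetric])
      qed
      ultimately have "B y \<le> (\<bar>C2\<bar> + exp D * C1^2) * (norm y)^2 / norm y powr 4"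
        using ny by (simp add: divide_right_mono)
      also have "\<dots> = (\<bar>C2\<bar> + exp D * C1^2) * norm y powr -2"
        using ny by (simp add: powr_minus field_simps power2_eq_square powr_realpow eval_nat_numeral)
      finally show ?thesis using True by (simp add: U_def)
    qed
  next
    case False
    then have ny: "norm y > r" by simp
    then have ny0: "norm y > 0" using r by linarith
    have key: "exp (w z) / norm y powr 4 \<le> k1 * E z" if z: "norm z \<le> norm x + norm y" for z
    proof -
      have "(r / norm y)^4 \<le> 1" using ny r ny0 by (intro power_le_one) (auto simp: divide_le_eq)
      then have h1: "1 \<le> norm y ^ 4 / r ^ 4" using r ny by (simp add: power_divide field_simps)
      have hh: "r * norm x \<le> norm x * norm y"
        using mult_left_mono[of r "norm y" "norm x"] ny by (simp add: mult.commute)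
      have "norm x \<le> norm x * (norm y / r)" using hh r by (simp add: field_simps)
      moreover have "(norm x / r + 1) * norm y = norm x * (norm y / r) + norm y"
        by (simp add: algebra_simps)
      ultimately have "norm z \<le> (norm x / r + 1) * norm y" using z by linarith
      then have "norm z ^ 4 \<le> ((norm x / r + 1) * norm y) ^ 4" by (intro power_mono) auto
      then have h2: "norm z ^ 4 \<le> (norm x / r + 1)^4 * norm y ^ 4" by (simp add: power_mult_distrib)
      have "1 + norm z ^ 4 \<le> k1 * norm y ^ 4"
      proof -
        have "k1 * norm y ^ 4 = norm y ^ 4 / r ^ 4 + (norm x / r + 1)^4 * norm y ^ 4"
          unfolding k1_def by (simp add: algebra_simps)
        then show ?thesis using h1 h2 by linarith
      qed
      then have "exp (w z) * (1 + norm z ^ 4) \<le> exp (w z) * (k1 * norm y ^ 4)" by simp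
      moreover have "1 + norm z ^ 4 > 0" by (simp add: add_pos_nonneg)
      ultimately show ?thesis using ny0 unfolding E_def
        by (simp add: powr_realpow field_simps)
    qed
    have "B y \<le> exp (- w x) * ((exp (w (x + y)) + exp (w (x - y))) / norm y powr 4)"
      unfolding B_def using ny0 by (intro mult_left_mono divide_right_mono) auto
    also have "\<dots> \<le> exp (- w x) * (k1 * E (x + y) + k1 * E (x - y))"
      using key[of "x + y"] key[of "x - y"] norm_triangle_ineq[of x y] norm_triangle_ineq4[of x y]
      by (intro mult_left_mono) (auto simp: add_divide_distrib)
    also have "\<dots> = U y" using False by (simp add: U_def algebra_simps)
    finally show ?thesis .
  qed
  have Am: "A \<in> borel_measurable lborel" unfolding A_def by measurable
  have Bm: "B \<in> borel_measurable lborel" unfolding B_def by measurable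
  have Aint: "integrable lborel A"
    by (rule sandwich_integrable[OF Lint Uint Am]) (use LA in \<open>eventually_elim\<close>, use AB BU in \<open>auto intro: order_trans\<close>)
  have Bint: "integrable lborel B"
    by (rule sandwich_integrable[OF Lint Uint Bm]) (use LA in \<open>eventually_elim\<close>, use AB BU in \<open>auto intro: order_trans\<close>)
  have IAB: "integral\<^sup>L lborel A \<le> integral\<^sup>L lborel B"
    by (rule integral_mono[OF Aint Bint AB])
  have fl1: "frac_lap (1/2) w x = - d3 (1/2) * integral\<^sup>L lborel A"
    unfolding frac_lap_def A_def by simp
  have fl2: "exp (- w x) * frac_lap (1/2) (\<lambda>y. exp (w y)) x = - d3 (1/2) * integral\<^sup>L lborel B"
  proof -
    have "integral\<^sup>L lborel B = exp (- w x) * (\<integral>y. (exp (w (x + y)) + exp (w (x - y)) - 2 * exp (w x)) / norm y powr 4 \<partial>lborel)"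
      unfolding B_def by (rule integral_mult_right_zero)
    then show ?thesis unfolding frac_lap_def by simp
  qed
  have d: "d3 (1/2) \<ge> 0" unfolding d3_def
    by (intro divide_nonneg_nonneg mult_nonneg_nonneg) (auto intro: less_imp_le Gamma_real_pos)
  show "exp (- w x) * frac_lap (1/2) (\<lambda>y. exp (w y)) x \<le> frac_lap (1/2) w x"
    unfolding fl1 fl2 using IAB d by (simp add: mult_left_mono)
qed

end
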